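(* Let $d\ge 2$ and let $G$ be a germ. Then every vector $p\in G$ has at most $\frac{d(d-1)}{2}$ entries equal to zero.
   Context: Fix an integer $d\ge 2$. $\langle\cdot,\cdot\rangle$ denotes the standard inner product on $\mathbb{R}^{d^2}$. The probability simplex is $\Delta=\{p\in\mathbb{R}^{d^2}: p(i)\ge 0\ \forall i,\ \sum_i p(i)=1\}$. A subset $A\subseteq\Delta$ is a germ if $\frac{1}{d(d+1)}\le\langle p,s\rangle\le\frac{2}{d(d+1)}$ for all $p,s\in A$ (including $p=s$). *)

theory Defs
  imports "HOL-Analysis.Analysis"
begin

text \<open>Vectors in R^(d^2) are represented as functions nat => real, with
coordinates indexed by {..<d^2}; values outside this index set are irrelevant.\<close>

definition ip :: "nat \<Rightarrow> (nat \<Rightarrow> real) \<Rightarrow> (nat \<Rightarrow> real) \<Rightarrow> real" where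
  "ip d p s = (\<Sum>i<d^2. p i * s i)"

definition prob_simplex :: "nat \<Rightarrow> (nat \<Rightarrow> real) set" where
  "prob_simplex d = {p. (\<forall>i<d^2. p i \<ge> 0) \<and> (\<Sum>i<d^2. p i) = 1}"

definition germ :: "nat \<Rightarrow> (nat \<Rightarrow> real) set \<Rightarrow> bool" where
  "germ d A \<longleftrightarrow> A \<subseteq> prob_simplex d \<and>
     (\<forall>p\<in>A. \<forall>s\<in>A. 1 / (real d * (real d + 1)) \<le> ip d p s \<and>
                      ip d p s \<le> 2 / (real d * (real d + 1)))"

end

theory Submission
  imports Defs
begin

theorem mainTheorem2:
  fixes d :: nat and G :: "(nat \<Rightarrow> real) set" and p :: "nat \<Rightarrow> real"
  assumes "d \<ge> 2" and "germ d G" and "p \<in> G"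
  shows "real (card {i. i < d^2 \<and> p i = 0}) \<le> real d * (real d - 1) / 2"
proof -
  define U where "U = {..<d^2}"
  define Z where "Z = {i. i < d^2 \<and> p i = 0}"
  define S where "S = U - Z"
  have fin: "finite U" "finite S" "finite Z" by (auto simp: U_def S_def Z_def)
  have ZU: "Z \<subseteq> U" by (auto simp: U_def Z_def)
  have cardsum: "card Z + card S = d^2"
    using ZU fin card_mono[OF fin(1) ZU] by (simp add: S_def card_Diff_subset U_def)
  have ps: "p \<in> prob_simplex d" using assms unfolding germ_def by auto
  have ipb: "ip d p p \<le> 2 / (real d * (real d + 1))" using assms unfolding germ_def by auto
  have s1: "(\<Sum>i\<in>U. p i) = 1" using ps by (simp add: prob_simplex_def U_def)
  have "(\<Sum>i\<in>U. p i) = (\<Sum>i\<in>S. p i)"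
    by (rule sum.mono_neutral_right) (auto simp: fin S_def Z_def U_def)
  hence sS: "(\<Sum>i\<in>S. p i) = 1" using s1 by simp
  have "ip d p p = (\<Sum>i\<in>U. (p i)\<^sup>2)" by (simp add: ip_def U_def power2_eq_square)
  also have "\<dots> = (\<Sum>i\<in>S. (p i)\<^sup>2)"
    by (rule sum.mono_neutral_right) (auto simp: fin S_def Z_def U_def)
  finally have ipS: "ip d p p = (\<Sum>i\<in>S. (p i)\<^sup>2)" .
  have "(\<Sum>i\<in>S. p i)\<^sup>2 \<le> (\<Sum>i\<in>S. (p i)\<^sup>2) * card S"
    by (rule sum_squared_le_sum_of_squares)
  hence "1 \<le> 2 / (real d * (real d + 1)) * card S"
    using sS ipS ipb by (smt (verit) mult_right_mono of_nat_0_le_iff power_one)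
  moreover have dpos: "real d * (real d + 1) > 0" using assms(1) by simp
  ultimately have "real d * (real d + 1) \<le> 2 * card S"
    by (simp add: field_simps)
  moreover have "real (card Z) + real (card S) = real d ^ 2"
    using cardsum by (metis of_nat_add of_nat_power)
  ultimately show ?thesis unfolding Z_def[symmetric]
    by (simp add: power2_eq_square algebra_simps)
qed

end
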